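(* Let $p$ be any of the following patterns, or any pattern in the same symmetry class as one of them: $(123,\{0,1,2\},\{0,1,2\})$, $(123,\{0,1,2\},\{0,1,3\})$, $(123,\{0,1,2\},\{0,2,3\})$, $(123,\{0,1,2\},\{1,2,3\})$, $(123,\{0,1,3\},\{0,1,3\})$, $(123,\{0,1,3\},\{0,2,3\})$, $(132,\{0,1,2\},\{0,1,2\})$, $(132,\{0,1,2\},\{0,1,3\})$, $(132,\{0,1,2\},\{0,2,3\})$, $(132,\{0,1,2\},\{1,2,3\})$, $(132,\{0,1,3\},\{0,1,3\})$, $(132,\{0,1,3\},\{0,2,3\})$, $(132,\{0,1,3\},\{1,2,3\})$, $(132,\{0,2,3\},\{0,2,3\})$, $(132,\{0,2,3\},\{1,2,3\})$, $(132,\{1,2,3\},\{1,2,3\})$. Then for all $n\ge3$, $a_n(p)=n!-(n-3)!$.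
   Context: For $n\ge1$, $\mathcal S_n$ is the set of permutations $\pi=\pi_1\cdots\pi_n$ of $[n]$. A bi-vincular pattern of length $k$ is a triple $p=(\sigma,X,Y)$ with $\sigma\in\mathcal S_k$ and $X,Y\subseteq\{0,1,\dots,k\}$. A permutation $\pi\in\mathcal S_n$ contains $p$ if there are indices $1\le i_1<\dots<i_k\le n$ such that $(\pi_{i_1},\dots,\pi_{i_k})$ is order-isomorphic to $\sigma$ and, letting $j_1<\dots<j_k$ be the values $\pi_{i_1},\dots,\pi_{i_k}$ sorted increasingly and setting $i_0=j_0=0$, $i_{k+1}=j_{k+1}=n+1$, one has $i_{x+1}=i_x+1$ for all $x\in X$ and $j_{y+1}=j_y+1$ for all $y\in Y$. Otherwise $\pi$ avoids $p$; $a_n(p)$ is the number of $\pi\in\mathcal S_n$ avoiding $p$. Symmetries: $p^{i}=(\sigma^{-1},Y,X)$, $p^{r}=(\sigma^{r},\{k-x:x\in X\},Y)$, $p^{c}=(\sigma^{c},X,\{k-y:y\in Y\})$ with $\sigma^r_j=\sigma_{k+1-j}$, $\sigma^c_j=k+1-\sigma_j$; the symmetry class of $p$ consists of all patterns obtained from $p$ by finitely many applications of these maps. *)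

theory Defs
  imports Main
begin

text \<open>Permutations of [n] are represented as lists of length n (one-line notation,
  1-based values); list position a-1 holds pi_a.\<close>

definition is_perm :: "nat \<Rightarrow> nat list \<Rightarrow> bool" where
  "is_perm n xs \<longleftrightarrow> length xs = n \<and> distinct xs \<and> set xs = {1..n}"

type_synonym bvpattern = "nat list \<times> nat set \<times> nat set"

definition contains :: "nat list \<Rightarrow> bvpattern \<Rightarrow> bool" where
  "contains pi p \<longleftrightarrow>
     (case p of (sigma, X, Y) \<Rightarrow>
       let n = length pi; k = length sigma in
       \<exists>idx :: nat \<Rightarrow> nat.
         (\<forall>a\<in>{1..k}. 1 \<le> idx a \<and> idx a \<le> n) \<and>
         (\<forall>a b. 1 \<le> a \<longrightarrow> a < b \<longrightarrow> b \<le> k \<longrightarrow> idx a < idx b) \<and>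
         (\<forall>a\<in>{1..k}. \<forall>b\<in>{1..k}.
             (pi ! (idx a - 1) < pi ! (idx b - 1)) \<longleftrightarrow> (sigma ! (a - 1) < sigma ! (b - 1))) \<and>
         (let ie = (\<lambda>a. if a = 0 then 0 else if a = k + 1 then n + 1 else idx a);
              js = sorted_list_of_set ((\<lambda>a. pi ! (idx a - 1)) ` {1..k});
              je = (\<lambda>a. if a = 0 then 0 else if a = k + 1 then n + 1 else js ! (a - 1))
          in (\<forall>x\<in>X. ie (x + 1) = ie x + 1) \<and> (\<forall>y\<in>Y. je (y + 1) = je y + 1)))"

definition avoiders :: "nat \<Rightarrow> bvpattern \<Rightarrow> nat" where
  "avoiders n p = card {pi. is_perm n pi \<and> \<not> contains pi p}"

definition perm_inv :: "nat list \<Rightarrow> nat list" where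
  "perm_inv sigma = map (\<lambda>j. Suc (LEAST i. i < length sigma \<and> sigma ! i = j)) [1..<Suc (length sigma)]"

definition pat_i :: "bvpattern \<Rightarrow> bvpattern" where
  "pat_i p = (case p of (sigma, X, Y) \<Rightarrow> (perm_inv sigma, Y, X))"

definition pat_r :: "bvpattern \<Rightarrow> bvpattern" where
  "pat_r p = (case p of (sigma, X, Y) \<Rightarrow> (rev sigma, (\<lambda>x. length sigma - x) ` X, Y))"

definition pat_c :: "bvpattern \<Rightarrow> bvpattern" where
  "pat_c p = (case p of (sigma, X, Y) \<Rightarrow>
     (map (\<lambda>v. length sigma + 1 - v) sigma, X, (\<lambda>y. length sigma - y) ` Y))"

inductive sym_class :: "bvpattern \<Rightarrow> bvpattern \<Rightarrow> bool" for p where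
  refl: "sym_class p p"
| inv: "sym_class p q \<Longrightarrow> sym_class p (pat_i q)"
| rev: "sym_class p q \<Longrightarrow> sym_class p (pat_r q)"
| comp: "sym_class p q \<Longrightarrow> sym_class p (pat_c q)"

definition base_patterns :: "bvpattern set" where
  "base_patterns = {
    ([1,2,3], {0,1,2}, {0,1,2}), ([1,2,3], {0,1,2}, {0,1,3}), ([1,2,3], {0,1,2}, {0,2,3}),
    ([1,2,3], {0,1,2}, {1,2,3}), ([1,2,3], {0,1,3}, {0,1,3}), ([1,2,3], {0,1,3}, {0,2,3}),
    ([1,3,2], {0,1,2}, {0,1,2}), ([1,3,2], {0,1,2}, {0,1,3}), ([1,3,2], {0,1,2}, {0,2,3}),
    ([1,3,2], {0,1,2}, {1,2,3}), ([1,3,2], {0,1,3}, {0,1,3}), ([1,3,2], {0,1,3}, {0,2,3}),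
    ([1,3,2], {0,1,3}, {1,2,3}), ([1,3,2], {0,2,3}, {0,2,3}), ([1,3,2], {0,2,3}, {1,2,3}),
    ([1,3,2], {1,2,3}, {1,2,3})}"

end

theory Submission
  imports Defs "HOL-Combinatorics.Multiset_Permutations"
begin


lemma remove_pos:
  assumes "finite A" "v \<in> A" "i < card A"
  shows "card {xs. distinct xs \<and> set xs = A \<and> xs!i = v \<and> Q xs}
       = card {ys. distinct ys \<and> set ys = A - {v} \<and> Q (take i ys @ v # drop i ys)}"
proof -
  let ?f = "\<lambda>ys. take i ys @ v # drop i ys"
  let ?g = "\<lambda>xs::'a list. take i xs @ drop (Suc i) xs"
  let ?L = "{xs. distinct xs \<and> set xs = A \<and> xs!i = v \<and> Q xs}"
  let ?R = "{ys. distinct ys \<and> set ys = A - {v} \<and> Q (take i ys @ v # drop i ys)}"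
  have lenR: "length ys = card A - 1" if "ys \<in> ?R" for ys
    using that assms distinct_card[of ys] by auto
  have lenL: "length xs = card A" if "xs \<in> ?L" for xs
    using that assms distinct_card[of xs] by auto
  have "bij_betw ?f ?R ?L"
  proof (rule bij_betw_byWitness[where f'="?g"])
    show "\<forall>a\<in>?R. ?g (?f a) = a"
    proof
      fix ys assume "ys \<in> ?R"
      with lenR[OF this] assms have "i \<le> length ys" by auto
      then show "?g (?f ys) = ys" by simp
    qed
    show "\<forall>a\<in>?L. ?f (?g a) = a"
    proof
      fix xs assume h: "xs \<in> ?L"
      with lenL[OF this] assms have "i < length xs" by auto
      then show "?f (?g xs) = xs" using h id_take_nth_drop[of i xs] by (simp add: min_def)
    qed
    show "?f ` ?R \<subseteq> ?L"
    proof
      fix x assume "x \<in> ?f ` ?R"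
      then obtain ys where ys: "ys \<in> ?R" and x: "x = ?f ys" by auto
      with lenR[OF ys] assms have il: "i \<le> length ys" by auto
      have d: "distinct ys" "v \<notin> set ys" using ys by auto
      have "distinct x" unfolding x using d
        using set_take_disj_set_drop_if_distinct[of ys i i]
        by (auto dest: in_set_takeD in_set_dropD)
      moreover have "set x = A"
        proof -
        have "set x = set (take i ys) \<union> set (drop i ys) \<union> {v}" unfolding x by auto
        also have "\<dots> = set (take i ys @ drop i ys) \<union> {v}" by (simp only: set_append)
        also have "\<dots> = A" using ys assms by auto
        finally show ?thesis .
      qed
      moreover have "x ! i = v" unfolding x using il by (simp add: nth_append)
      ultimately show "x \<in> ?L" using ys x by auto
    qed
    show "?g ` ?L \<subseteq> ?R"
    proof
      fix y assume "y \<in> ?g ` ?L"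
      then obtain xs where xs: "xs \<in> ?L" and y: "y = ?g xs" by auto
      with lenL[OF xs] assms have il: "i < length xs" by auto
      have e: "xs = take i xs @ v # drop (Suc i) xs" using xs il id_take_nth_drop[of i xs] by simp
      have dx: "distinct xs" using xs by auto
      have d2: "distinct (take i xs @ v # drop (Suc i) xs)" using dx e by metis
      have e': "set xs = set (take i xs @ v # drop (Suc i) xs)" using e by metis
      from d2 have "distinct y" "v \<notin> set y" unfolding y by auto
      moreover have "set y \<union> {v} = A" using xs e' unfolding y by auto
      ultimately have "set y = A - {v}" by auto
      moreover have "?f y = take i xs @ v # drop (Suc i) xs" unfolding y using il by (simp add: min_def)
      then have "?f y = xs" using e by metis
      ultimately show "y \<in> ?R" using xs \<open>distinct y\<close> by auto
    qed
  qed
  then show ?thesis by (simp add: bij_betw_same_card)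
qed

lemma count_fixed:
  "finite A \<Longrightarrow> sorted_wrt (>) (map fst cs) \<Longrightarrow> distinct (map snd cs) \<Longrightarrow>
   set (map snd cs) \<subseteq> A \<Longrightarrow> (\<forall>c\<in>set cs. fst c < card A) \<Longrightarrow>
   card {xs. distinct xs \<and> set xs = A \<and> (\<forall>c\<in>set cs. xs ! fst c = snd c)} = fact (card A - length cs)"
proof (induction cs arbitrary: A)
  case Nil
  then show ?case using card_permutations_of_set[of A] by (simp add: permutations_of_set_def conj_commute)
next
  case (Cons c cs)
  obtain i v where c: "c = (i, v)" by (cases c)
  have vA: "v \<in> A" and iA: "i < card A" using Cons.prems c by auto
  have lt: "\<forall>d\<in>set cs. fst d < i" using Cons.prems(2) c by auto
  have "card {xs. distinct xs \<and> set xs = A \<and> (\<forall>d\<in>set (c#cs). xs ! fst d = snd d)}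
      = card {xs. distinct xs \<and> set xs = A \<and> xs ! i = v \<and> (\<forall>d\<in>set cs. xs ! fst d = snd d)}"
    using c by (auto intro!: arg_cong[where f=card])
  also have "\<dots> = card {ys. distinct ys \<and> set ys = A - {v} \<and>
        (\<forall>d\<in>set cs. (take i ys @ v # drop i ys) ! fst d = snd d)}"
    by (rule remove_pos[OF Cons.prems(1) vA iA])
  also have "\<dots> = card {ys. distinct ys \<and> set ys = A - {v} \<and> (\<forall>d\<in>set cs. ys ! fst d = snd d)}"
  proof (rule arg_cong[where f=card], rule Collect_cong, rule conj_cong[OF HOL.refl], rule conj_cong[OF HOL.refl])
    fix ys assume "distinct ys" "set ys = A - {v}"
    then have "length ys = card A - 1" using distinct_card[of ys] vA Cons.prems(1) by auto
    then have "i \<le> length ys" using iA by auto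
    then show "(\<forall>d\<in>set cs. (take i ys @ v # drop i ys) ! fst d = snd d) = (\<forall>d\<in>set cs. ys ! fst d = snd d)"
      using lt by (auto simp: nth_append)
  qed
  also have "\<dots> = fact (card (A - {v}) - length cs)"
  proof (rule Cons.IH)
    show "finite (A - {v})" using Cons.prems by auto
    show "sorted_wrt (>) (map fst cs)" using Cons.prems by auto
    show "distinct (map snd cs)" using Cons.prems by auto
    show "set (map snd cs) \<subseteq> A - {v}" using Cons.prems c by auto
    show "\<forall>d\<in>set cs. fst d < card (A - {v})" using lt iA vA Cons.prems(1) by auto
  qed
  also have "\<dots> = fact (card A - length (c # cs))" using vA Cons.prems(1) by simp
  finally show ?case .
qed



definition S6 :: "nat list set" where
  "S6 = {[1,2,3],[1,3,2],[2,1,3],[2,3,1],[3,1,2],[3,2,1]}"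
definition XS :: "nat set set" where
  "XS = {{0,1,2},{0,1,3},{0,2,3},{1,2,3}}"
definition G :: "bvpattern set" where
  "G = {(s,X,Y). s \<in> S6 \<and> X \<in> XS \<and> Y \<in> XS}"

lemma pinv1: "perm_inv [1,2,3] = [1,2,3]" unfolding perm_inv_def by (simp add: upt_rec,
   (intro conjI; rule Least_equality; auto simp: less_Suc_eq nth_Cons' numeral_3_eq_3))
lemma pinv2: "perm_inv [1,3,2] = [1,3,2]" unfolding perm_inv_def by (simp add: upt_rec,
   (intro conjI; rule Least_equality; auto simp: less_Suc_eq nth_Cons' numeral_3_eq_3))
lemma pinv3: "perm_inv [2,1,3] = [2,1,3]" unfolding perm_inv_def by (simp add: upt_rec,
   (intro conjI; rule Least_equality; auto simp: less_Suc_eq nth_Cons' numeral_3_eq_3))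
lemma pinv4: "perm_inv [2,3,1] = [3,1,2]" unfolding perm_inv_def by (simp add: upt_rec,
   (intro conjI; rule Least_equality; auto simp: less_Suc_eq nth_Cons' numeral_3_eq_3))
lemma pinv5: "perm_inv [3,1,2] = [2,3,1]" unfolding perm_inv_def by (simp add: upt_rec,
   (intro conjI; rule Least_equality; auto simp: less_Suc_eq nth_Cons' numeral_3_eq_3))
lemma pinv6: "perm_inv [3,2,1] = [3,2,1]" unfolding perm_inv_def by (simp add: upt_rec,
   (intro conjI; rule Least_equality; auto simp: less_Suc_eq nth_Cons' numeral_3_eq_3))

lemma G_i: "p \<in> G \<Longrightarrow> pat_i p \<in> G"
proof -
  assume "p \<in> G"
  then obtain s X Y where p: "p = (s,X,Y)" "s \<in> S6" "X \<in> XS" "Y \<in> XS" by (auto simp: G_def)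
  have "perm_inv s \<in> S6" using p(2) unfolding S6_def
    by (elim insertE emptyE; simp only: pinv1 pinv2 pinv3 pinv4 pinv5 pinv6; blast)
  then show ?thesis using p by (simp add: G_def pat_i_def)
qed

lemma XS_r: "X \<in> XS \<Longrightarrow> (\<lambda>x. 3 - x) ` X \<in> XS"
  unfolding XS_def by (elim insertE emptyE; simp add: insert_commute)

lemma G_r: "p \<in> G \<Longrightarrow> pat_r p \<in> G"
proof -
  assume "p \<in> G"
  then obtain s X Y where p: "p = (s,X,Y)" "s \<in> S6" "X \<in> XS" "Y \<in> XS" by (auto simp: G_def)
  then have "length s = 3" "rev s \<in> S6" by (auto simp: S6_def)
  then show ?thesis using p XS_r[of X] by (simp add: G_def pat_r_def)
qed

lemma G_c: "p \<in> G \<Longrightarrow> pat_c p \<in> G"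
proof -
  assume "p \<in> G"
  then obtain s X Y where p: "p = (s,X,Y)" "s \<in> S6" "X \<in> XS" "Y \<in> XS" by (auto simp: G_def)
  then have "length s = 3" "map (\<lambda>v. 3 + 1 - v) s \<in> S6" by (auto simp: S6_def)
  then show ?thesis using p XS_r[of Y] by (simp add: G_def pat_c_def)
qed

lemma XS_mem: "{0,1,2} \<in> XS" "{0,1,3} \<in> XS" "{0,2,3} \<in> XS" "{1,2,3} \<in> XS"
  unfolding XS_def by blast+

lemma S6_mem: "[1,2,3] \<in> S6" "[1,3,2] \<in> S6"
  unfolding S6_def by blast+

lemma base_G: "base_patterns \<subseteq> G"
  unfolding base_patterns_def G_def
  by (intro insert_subsetI empty_subsetI; simp only: mem_Collect_eq prod.case XS_mem S6_mem simp_thms)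

lemma sym_G: "sym_class q p \<Longrightarrow> q \<in> G \<Longrightarrow> p \<in> G"
  by (induction rule: sym_class.induct) (auto intro: G_i G_r G_c)



definition ieF :: "nat \<Rightarrow> (nat \<Rightarrow> nat) \<Rightarrow> nat \<Rightarrow> nat" where
  "ieF n idx a = (if a = 0 then 0 else if a = 4 then n + 1 else idx a)"
definition jeF :: "nat \<Rightarrow> nat list \<Rightarrow> nat \<Rightarrow> nat" where
  "jeF n js a = (if a = 0 then 0 else if a = 4 then n + 1 else js ! (a - 1))"
definition Pf :: "nat set \<Rightarrow> nat \<Rightarrow> nat list" where
  "Pf X n = (if 3 \<notin> X then [1,2,3] else if 2 \<notin> X then [1,2,n] else if 1 \<notin> X then [1,n-1,n] else [n-2,n-1,n])"

lemma contains_alt: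
  assumes "length s = 3"
  shows "contains pp (s,X,Y) \<longleftrightarrow> (\<exists>idx.
    (\<forall>a\<in>{1..3}. 1 \<le> idx a \<and> idx a \<le> length pp) \<and>
    (\<forall>a b. 1 \<le> a \<longrightarrow> a < b \<longrightarrow> b \<le> 3 \<longrightarrow> idx a < idx b) \<and>
    (\<forall>a\<in>{1..3}. \<forall>b\<in>{1..3}. (pp ! (idx a - 1) < pp ! (idx b - 1)) \<longleftrightarrow> (s ! (a - 1) < s ! (b - 1))) \<and>
    (\<forall>x\<in>X. ieF (length pp) idx (x + 1) = ieF (length pp) idx x + 1) \<and>
    (\<forall>y\<in>Y. jeF (length pp) (sorted_list_of_set ((\<lambda>a. pp ! (idx a - 1)) ` {1..3})) (y + 1)
         = jeF (length pp) (sorted_list_of_set ((\<lambda>a. pp ! (idx a - 1)) ` {1..3})) y + 1))"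
  using assms by (simp add: contains_def ieF_def jeF_def Let_def)

lemma Xcond:
  assumes "X \<in> XS" "3 \<le> n"
  shows "(\<forall>x\<in>X. ieF n idx (x + 1) = ieF n idx x + 1) \<longleftrightarrow>
     (idx 1 = Pf X n ! 0 \<and> idx 2 = Pf X n ! 1 \<and> idx 3 = Pf X n ! 2)"
  using assms(1) unfolding XS_def
  by (elim insertE emptyE; use assms(2) in \<open>auto simp add: ieF_def Pf_def numeral_eq_Suc\<close>)

lemma Ycond:
  assumes "Y \<in> XS" "3 \<le> n" "length js = 3"
  shows "(\<forall>y\<in>Y. jeF n js (y + 1) = jeF n js y + 1) \<longleftrightarrow> js = Pf Y n"
proof -
  obtain a b c where js: "js = [a,b,c]" using assms(3)
    by (auto simp: numeral_3_eq_3 length_Suc_conv)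
  show ?thesis using assms(1) unfolding XS_def js
    by (elim insertE emptyE; use assms(2) in \<open>auto simp add: jeF_def Pf_def numeral_eq_Suc\<close>)
qed

lemma Pf_props:
  assumes "X \<in> XS" "3 \<le> n"
  shows "length (Pf X n) = 3 \<and> 1 \<le> Pf X n ! 0 \<and> Pf X n ! 0 < Pf X n ! 1 \<and> Pf X n ! 1 < Pf X n ! 2 \<and> Pf X n ! 2 \<le> n"
  using assms(1) unfolding XS_def
  by (elim insertE emptyE; use assms(2) in \<open>auto simp add: Pf_def numeral_eq_Suc\<close>)

lemma S6_props: "s \<in> S6 \<Longrightarrow> length s = 3 \<and> distinct s \<and> set s = {1,2,3}"
  by (auto simp: S6_def)



lemma three_sort: "(a::nat) \<in> {x,y,z} \<Longrightarrow> b \<in> {x,y,z} \<Longrightarrow> c \<in> {x,y,z} \<Longrightarrow> a<b \<Longrightarrow> b<c \<Longrightarrow> x<y \<Longrightarrow> y<z \<Longrightarrow> a=x \<and> b=y \<and> c=z"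
  by auto

lemma I3: "{1..3::nat} = {1,2,3}" by auto

lemma sigma_vals:
  assumes "s \<in> S6" "\<forall>a\<in>{1..3}. \<forall>b\<in>{1..3}. (w a < w b) = (s!(a-1) < s!(b-1))"
    "w ` {1..3} = {v1,v2,v3::nat}" "v1<v2" "v2<v3"
  shows "\<forall>a\<in>{1..3}. w a = [v1,v2,v3] ! (s!(a-1) - 1)"
proof -
  have W: "w 1 \<in> {v1,v2,v3}" "w 2 \<in> {v1,v2,v3}" "w 3 \<in> {v1,v2,v3}" using assms(3) by (auto simp: I3)
  have o: "(w 1 < w 2) = (s!0 < s!1)" "(w 1 < w 3) = (s!0 < s!2)" "(w 2 < w 3) = (s!1 < s!2)"
    "(w 2 < w 1) = (s!1 < s!0)" "(w 3 < w 1) = (s!2 < s!0)" "(w 3 < w 2) = (s!2 < s!1)"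
    using assms(2) by (auto simp: I3)
  note T = three_sort[OF W(1) W(2) W(3) _ _ assms(4,5)] three_sort[OF W(1) W(3) W(2) _ _ assms(4,5)]
     three_sort[OF W(2) W(1) W(3) _ _ assms(4,5)] three_sort[OF W(2) W(3) W(1) _ _ assms(4,5)]
     three_sort[OF W(3) W(1) W(2) _ _ assms(4,5)] three_sort[OF W(3) W(2) W(1) _ _ assms(4,5)]
  from assms(1) show ?thesis unfolding S6_def
  proof (elim insertE emptyE)
    assume s: "s = [1,2,3]"
    have "w 1 = v1 \<and> w 2 = v2 \<and> w 3 = v3" by (rule T(1)) (use o s in simp)+
    then show ?thesis using s unfolding I3 by simp
  next
    assume s: "s = [1,3,2]"
    have "w 1 = v1 \<and> w 3 = v2 \<and> w 2 = v3" by (rule T(2)) (use o s in simp)+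
    then show ?thesis using s unfolding I3 by simp
  next
    assume s: "s = [2,1,3]"
    have "w 2 = v1 \<and> w 1 = v2 \<and> w 3 = v3" by (rule T(3)) (use o s in simp)+
    then show ?thesis using s unfolding I3 by simp
  next
    assume s: "s = [2,3,1]"
    have "w 3 = v1 \<and> w 1 = v2 \<and> w 2 = v3" by (rule T(5)) (use o s in simp)+
    then show ?thesis using s unfolding I3 by simp
  next
    assume s: "s = [3,1,2]"
    have "w 2 = v1 \<and> w 3 = v2 \<and> w 1 = v3" by (rule T(4)) (use o s in simp)+
    then show ?thesis using s unfolding I3 by simp
  next
    assume s: "s = [3,2,1]"
    have "w 3 = v1 \<and> w 2 = v2 \<and> w 1 = v3" by (rule T(6)) (use o s in simp)+
    then show ?thesis using s unfolding I3 by simp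
  qed
qed

lemma len3: "length xs = 3 \<Longrightarrow> xs = [xs!0, xs!1, xs!2]"
  by (auto simp: numeral_3_eq_3 length_Suc_conv)

lemma le3: "1 \<le> a \<Longrightarrow> a \<le> 3 \<Longrightarrow> a = 1 \<or> a = 2 \<or> a = (3::nat)" by auto

lemma contains_iff:
  assumes s: "s \<in> S6" and X: "X \<in> XS" and Y: "Y \<in> XS" and n: "3 \<le> n" and pp: "is_perm n pp"
  shows "contains pp (s,X,Y) \<longleftrightarrow> (\<forall>a<3. pp ! (Pf X n ! a - 1) = Pf Y n ! (s!a - 1))"
proof -
  have ls: "length s = 3" "distinct s" "set s = {1,2,3}" using S6_props[OF s] by auto
  have lp: "length pp = n" "distinct pp" "set pp = {1..n}" using pp by (auto simp: is_perm_def)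
  obtain p1 p2 p3 where P: "Pf X n = [p1,p2,p3]" "1 \<le> p1" "p1<p2" "p2<p3" "p3 \<le> n"
    using Pf_props[OF X n] len3[of "Pf X n"] by metis
  obtain v1 v2 v3 where V: "Pf Y n = [v1,v2,v3]" "1 \<le> v1" "v1<v2" "v2<v3" "v3 \<le> n"
    using Pf_props[OF Y n] len3[of "Pf Y n"] by metis
  obtain s1 s2 s3 where S: "s = [s1,s2,s3]" using len3[OF ls(1)] by metis
  have distV: "distinct [v1,v2,v3]" "sorted [v1,v2,v3]" using V by auto
  show ?thesis
  proof
    assume "contains pp (s,X,Y)"
    then obtain idx where
      O: "\<forall>a\<in>{1..3}. \<forall>b\<in>{1..3}. (pp ! (idx a - 1) < pp ! (idx b - 1)) \<longleftrightarrow> (s ! (a - 1) < s ! (b - 1))" and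
      XC: "\<forall>x\<in>X. ieF (length pp) idx (x + 1) = ieF (length pp) idx x + 1" and
      YC: "\<forall>y\<in>Y. jeF (length pp) (sorted_list_of_set ((\<lambda>a. pp ! (idx a - 1)) ` {1..3})) (y + 1)
         = jeF (length pp) (sorted_list_of_set ((\<lambda>a. pp ! (idx a - 1)) ` {1..3})) y + 1"
      unfolding contains_alt[OF ls(1)] by blast
    have idx: "idx 1 = p1" "idx 2 = p2" "idx 3 = p3" using XC Xcond[OF X n] P lp(1) by simp_all
    define w where "w = (\<lambda>a. pp ! (idx a - 1))"
    have ne: "w 1 \<noteq> w 2" "w 1 \<noteq> w 3" "w 2 \<noteq> w 3"
      using lp P idx by (simp_all add: w_def nth_eq_iff_index_eq)
    have "inj_on w {1..3}" unfolding I3 using ne by (auto simp: inj_on_def)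
    then have cw: "card (w ` {1..3}) = 3" by (simp add: card_image)
    define J where "J = sorted_list_of_set (w ` {1..3})"
    have lJ: "length J = 3" using cw by (simp add: J_def)
    have "\<forall>y\<in>Y. jeF n J (y + 1) = jeF n J y + 1" using YC lp(1) by (simp add: J_def w_def)
    then have "J = [v1,v2,v3]" using Ycond[OF Y n lJ] V by simp
    moreover have "set J = w ` {1..3}" by (simp add: J_def)
    ultimately have img: "w ` {1..3} = {v1,v2,v3}" by simp
    have O': "\<forall>a\<in>{1..3}. \<forall>b\<in>{1..3}. (w a < w b) = (s!(a-1) < s!(b-1))" using O by (simp add: w_def)
    have sv: "\<forall>a\<in>{1..3}. w a = [v1,v2,v3] ! (s!(a-1) - 1)"
      by (rule sigma_vals[OF s O' img]) (use V in auto)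
    show "\<forall>a<3. pp ! (Pf X n ! a - 1) = Pf Y n ! (s!a - 1)"
    proof (intro allI impI)
      fix a :: nat assume "a < 3"
      then have "a = 0 \<or> a = 1 \<or> a = 2" by auto
      then show "pp ! (Pf X n ! a - 1) = Pf Y n ! (s!a - 1)"
        using sv P V idx unfolding I3 w_def by auto
    qed
  next
    assume H: "\<forall>a<3. pp ! (Pf X n ! a - 1) = Pf Y n ! (s!a - 1)"
    define idx where "idx = (\<lambda>a::nat. [p1,p2,p3] ! (a - 1))"
    have wv: "pp ! (idx a - 1) = [v1,v2,v3] ! (s!(a-1) - 1)" if "a \<in> {1..3}" for a
    proof -
      have "a - 1 < 3" using that by auto
      then show ?thesis using H P V by (simp add: idx_def)
    qed
    have sa: "s!(a-1) \<in> {1,2,3}" if "a \<in> {1..3}" for a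
    proof -
      have "a - 1 < length s" using that ls(1) by auto
      then show ?thesis using ls(3) nth_mem by blast
    qed
    have Vm: "([v1,v2,v3] ! (t-1) < [v1,v2,v3] ! (u-1)) = (t < u)" if "t \<in> {1,2,3}" "u \<in> {1,2,3}" for t u
      using that V by auto
    have img: "(\<lambda>a. pp ! (idx a - 1)) ` {1..3} = {v1,v2,v3}"
    proof -
      have "(\<lambda>a. pp ! (idx a - 1)) ` {1..3} = (\<lambda>t. [v1,v2,v3] ! (t-1)) ` ((\<lambda>a. s!(a-1)) ` {1..3})"
        using wv by (auto simp: image_image)
      also have "(\<lambda>a. s!(a-1)) ` {1..3} = set s"
        using S unfolding I3 by simp
      finally show ?thesis using ls(3) by simp
    qed
    have J: "sorted_list_of_set {v1,v2,v3} = [v1,v2,v3]"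
      by (rule sorted_distinct_set_unique) (use distV in auto)
    show "contains pp (s,X,Y)"
      unfolding contains_alt[OF ls(1)]
    proof (intro exI conjI)
      show "\<forall>a\<in>{1..3}. 1 \<le> idx a \<and> idx a \<le> length pp" using P lp unfolding I3 by (auto simp: idx_def)
      show "\<forall>a b. 1 \<le> a \<longrightarrow> a < b \<longrightarrow> b \<le> 3 \<longrightarrow> idx a < idx b"
      proof (intro allI impI)
        fix a b :: nat assume "1 \<le> a" "a < b" "b \<le> 3"
        then have "(a = 1 \<and> b = 2) \<or> (a = 1 \<and> b = 3) \<or> (a = 2 \<and> b = 3)" by auto
        then show "idx a < idx b" using P by (auto simp: idx_def)
      qed
      show "\<forall>a\<in>{1..3}. \<forall>b\<in>{1..3}. (pp ! (idx a - 1) < pp ! (idx b - 1)) \<longleftrightarrow> (s ! (a - 1) < s ! (b - 1))"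
        using wv sa Vm by simp
      show "\<forall>x\<in>X. ieF (length pp) idx (x + 1) = ieF (length pp) idx x + 1"
        using Xcond[OF X n] P lp(1) by (simp add: idx_def)
      show "\<forall>y\<in>Y. jeF (length pp) (sorted_list_of_set ((\<lambda>a. pp ! (idx a - 1)) ` {1..3})) (y + 1)
         = jeF (length pp) (sorted_list_of_set ((\<lambda>a. pp ! (idx a - 1)) ` {1..3})) y + 1"
        using Ycond[OF Y n, of "[v1,v2,v3]"] V lp(1) img J by simp
    qed
  qed
qed

lemma all3: "(\<forall>a<(3::nat). P a) \<longleftrightarrow> P 0 \<and> P 1 \<and> P 2"
  by (auto simp: numeral_eq_Suc less_Suc_eq)

lemma is_perm_alt: "is_perm n xs \<longleftrightarrow> distinct xs \<and> set xs = {1..n}"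
  unfolding is_perm_def using distinct_card[of xs] by auto

lemma perms_eq: "{xs. is_perm n xs} = permutations_of_set {1..n}"
  by (auto simp: is_perm_alt permutations_of_set_def)

lemma card_perms: "card {xs. is_perm n xs} = fact n"
  unfolding perms_eq by simp

lemma card_contains:
  assumes p: "p \<in> G" and n: "3 \<le> n"
  shows "card {xs. is_perm n xs \<and> contains xs p} = fact (n - 3)"
proof -
  obtain s X Y where pd: "p = (s,X,Y)" and s: "s \<in> S6" and X: "X \<in> XS" and Y: "Y \<in> XS"
    using p by (auto simp: G_def)
  obtain p1 p2 p3 where P: "Pf X n = [p1,p2,p3]" "1 \<le> p1" "p1<p2" "p2<p3" "p3 \<le> n"
    using Pf_props[OF X n] len3[of "Pf X n"] by metis
  obtain v1 v2 v3 where V: "Pf Y n = [v1,v2,v3]" "1 \<le> v1" "v1<v2" "v2<v3" "v3 \<le> n"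
    using Pf_props[OF Y n] len3[of "Pf Y n"] by metis
  define cs where "cs = [(p3 - 1, [v1,v2,v3] ! (s!2 - 1)), (p2 - 1, [v1,v2,v3] ! (s!1 - 1)), (p1 - 1, [v1,v2,v3] ! (s!0 - 1))]"
  have "{xs. is_perm n xs \<and> contains xs p} =
      {xs. distinct xs \<and> set xs = {1..n} \<and> (\<forall>c\<in>set cs. xs ! fst c = snd c)}"
  proof (rule Collect_cong)
    fix xs
    show "(is_perm n xs \<and> contains xs p) =
      (distinct xs \<and> set xs = {1..n} \<and> (\<forall>c\<in>set cs. xs ! fst c = snd c))"
    proof (cases "is_perm n xs")
      case True
      then show ?thesis using contains_iff[OF s X Y n True] P V unfolding pd cs_def all3 is_perm_alt
        by auto
    next
      case False
      then show ?thesis unfolding is_perm_alt by blast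
    qed
  qed
  also have "card \<dots> = fact (card {1..n} - length cs)"
  proof (rule count_fixed)
    show "sorted_wrt (>) (map fst cs)" using P by (auto simp: cs_def)
    show "distinct (map snd cs)" using s V unfolding cs_def S6_def by (elim insertE emptyE; simp)
    show "set (map snd cs) \<subseteq> {1..n}" using s V unfolding cs_def S6_def by (elim insertE emptyE; simp)
    show "\<forall>c\<in>set cs. fst c < card {1..n}" using P by (auto simp: cs_def)
  qed simp
  finally show ?thesis by (simp add: cs_def numeral_eq_Suc)
qed

theorem mainTheorem20:
  fixes q p :: bvpattern and n :: nat
  assumes "q \<in> base_patterns" and "sym_class q p" and "n \<ge> 3"
  shows "avoiders n p = fact n - fact (n - 3)"
proof -
  have pG: "p \<in> G" using sym_G[OF assms(2)] base_G assms(1) by blast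
  have fin: "finite {xs. is_perm n xs}"
    unfolding perms_eq by simp
  have "{pi. is_perm n pi \<and> \<not> contains pi p} = {xs. is_perm n xs} - {xs. is_perm n xs \<and> contains xs p}"
    by auto
  then have "avoiders n p = card {xs. is_perm n xs} - card {xs. is_perm n xs \<and> contains xs p}"
    unfolding avoiders_def using fin by (simp, subst card_Diff_subset) auto
  then show ?thesis using card_perms card_contains[OF pG assms(3)] by simp
qed


end
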